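(* Let $\mathcal{H}=(X,\mathcal{E})$ be a finite hypergraph with no isolated vertices and no empty hyperedge, and let $G$ be its incidence graph. Then $\gamma_{\rm gr}^t(G)=2\rho_{\rm gr}(\mathcal{H})$.
   Context: The incidence graph of $\mathcal{H}$ is the bipartite graph with vertex set $X\cup\mathcal{E}$ (disjoint copies), where $x\in X$ is adjacent to $B\in\mathcal{E}$ iff $x\in B$. A sequence $(C_1,\ldots,C_r)$ of distinct hyperedges is an edge covering sequence if $C_i\setminus\bigcup_{j<i}C_j\neq\emptyset$ for all $i\in\{2,\ldots,r\}$ and $C_1\cup\cdots\cup C_r=X$; $\rho_{\rm gr}(\mathcal{H})$ is the maximum length of an edge covering sequence. For a graph $G$ without isolated vertices, with $N(v)$ the open neighborhood, a sequence $(v_1,\ldots,v_k)$ of distinct vertices is a total dominating sequence if $N(v_i)\setminus \bigcup_{j=1}^{i-1} N(v_j)\neq\emptyset$ for every $i\in\{2,\ldots,k\}$ and every vertex of $G$ has a neighbor in $\{v_1,\ldots,v_k\}$; $\gamma_{\rm gr}^t(G)$ is the maximum length of a total dominating sequence. *)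

theory Defs
  imports Main
begin

definition hypergraph :: "'a set \<Rightarrow> 'a set set \<Rightarrow> bool" where
  "hypergraph X E \<longleftrightarrow> finite X \<and> finite E \<and> (\<forall>B\<in>E. B \<subseteq> X)"

definition no_isolated_vertices_hg :: "'a set \<Rightarrow> 'a set set \<Rightarrow> bool" where
  "no_isolated_vertices_hg X E \<longleftrightarrow> (\<forall>x\<in>X. \<exists>B\<in>E. x \<in> B)"

text \<open>Edge covering sequences (lists of distinct hyperedges; 0-based index i \<ge> 1 corresponds to i \<ge> 2).\<close>

definition edge_covering_seq :: "'a set \<Rightarrow> 'a set set \<Rightarrow> 'a set list \<Rightarrow> bool" where
  "edge_covering_seq X E cs \<longleftrightarrow>
     distinct cs \<and> set cs \<subseteq> E \<and>
     (\<forall>i. 1 \<le> i \<and> i < length cs \<longrightarrow> cs ! i - \<Union>(set (take i cs)) \<noteq> {}) \<and>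
     \<Union>(set cs) = X"

definition rho_gr :: "'a set \<Rightarrow> 'a set set \<Rightarrow> nat" where
  "rho_gr X E = Max {length cs | cs. edge_covering_seq X E cs}"

definition open_nbhd :: "'v set \<Rightarrow> ('v \<Rightarrow> 'v \<Rightarrow> bool) \<Rightarrow> 'v \<Rightarrow> 'v set" where
  "open_nbhd V adj v = {u \<in> V. adj v u}"

definition total_dom_seq :: "'v set \<Rightarrow> ('v \<Rightarrow> 'v \<Rightarrow> bool) \<Rightarrow> 'v list \<Rightarrow> bool" where
  "total_dom_seq V adj vs \<longleftrightarrow>
     distinct vs \<and> set vs \<subseteq> V \<and>
     (\<forall>i. 1 \<le> i \<and> i < length vs \<longrightarrow>
        open_nbhd V adj (vs ! i) - \<Union>(open_nbhd V adj ` set (take i vs)) \<noteq> {}) \<and>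
     (\<forall>w\<in>V. \<exists>v\<in>set vs. w \<in> open_nbhd V adj v)"

definition grundy_total_dom :: "'v set \<Rightarrow> ('v \<Rightarrow> 'v \<Rightarrow> bool) \<Rightarrow> nat" where
  "grundy_total_dom V adj = Max {length vs | vs. total_dom_seq V adj vs}"

definition inc_vertices :: "'a set \<Rightarrow> 'a set set \<Rightarrow> ('a + 'a set) set" where
  "inc_vertices X E = Inl ` X \<union> Inr ` E"

fun inc_adj :: "('a + 'a set) \<Rightarrow> ('a + 'a set) \<Rightarrow> bool" where
  "inc_adj (Inl x) (Inr B) = (x \<in> B)"
| "inc_adj (Inr B) (Inl x) = (x \<in> B)"
| "inc_adj _ _ = False"

end

theory Submission
  imports Defs
begin

definition legalg :: "('q \<Rightarrow> 'q list \<Rightarrow> bool) \<Rightarrow> 'q list \<Rightarrow> bool" where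
  "legalg F qs = (\<forall>i. 1 \<le> i \<and> i < length qs \<longrightarrow> F (qs ! i) (take i qs))"

lemma legalg_Nil[simp]: "legalg F []"
  by (simp add: legalg_def)

lemma legalg_snoc: "legalg F (qs @ [q]) = (legalg F qs \<and> (qs \<noteq> [] \<longrightarrow> F q qs))"
proof
  assume a: "legalg F (qs @ [q])"
  have "legalg F qs"
    unfolding legalg_def
  proof (intro allI impI)
    fix i assume "1 \<le> i \<and> i < length qs"
    with a[unfolded legalg_def, rule_format, of i] show "F (qs ! i) (take i qs)"
      by (simp add: nth_append)
  qed
  moreover have "qs \<noteq> [] \<longrightarrow> F q qs"
    using a[unfolded legalg_def, rule_format, of "length qs"]
    by (simp add: Suc_le_eq)
  ultimately show "legalg F qs \<and> (qs \<noteq> [] \<longrightarrow> F q qs)" by blast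
next
  assume a: "legalg F qs \<and> (qs \<noteq> [] \<longrightarrow> F q qs)"
  show "legalg F (qs @ [q])"
    unfolding legalg_def
  proof (intro allI impI)
    fix i assume i: "1 \<le> i \<and> i < length (qs @ [q])"
    show "F ((qs @ [q]) ! i) (take i (qs @ [q]))"
    proof (cases "i < length qs")
      case True
      then show ?thesis using a i by (simp add: nth_append legalg_def)
    next
      case False
      then have "i = length qs" using i by simp
      then show ?thesis using a i by auto
    qed
  qed
qed

definition fpR :: "('p \<Rightarrow> 'q \<Rightarrow> bool) \<Rightarrow> 'p set \<Rightarrow> 'q \<Rightarrow> 'q list \<Rightarrow> bool" where
  "fpR R P q prev = (\<exists>p\<in>P. R p q \<and> (\<forall>q'\<in>set prev. \<not> R p q'))"

definition legalR :: "('p \<Rightarrow> 'q \<Rightarrow> bool) \<Rightarrow> 'p set \<Rightarrow> 'q set \<Rightarrow> 'q list \<Rightarrow> bool" where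
  "legalR R P Q qs = (distinct qs \<and> set qs \<subseteq> Q \<and> legalg (fpR R P) qs)"

definition coverR :: "('p \<Rightarrow> 'q \<Rightarrow> bool) \<Rightarrow> 'p set \<Rightarrow> 'q list \<Rightarrow> bool" where
  "coverR R P qs = (\<forall>p\<in>P. \<exists>q\<in>set qs. R p q)"

lemma legalR_len: "finite Q \<Longrightarrow> legalR R P Q qs \<Longrightarrow> length qs \<le> card Q"
  unfolding legalR_def by (metis card_mono distinct_card)

lemma extend_aux:
  assumes "finite Q" "\<forall>p\<in>P. \<exists>q\<in>Q. R p q"
  shows "\<forall>qs. card Q - length qs = n \<longrightarrow> legalR R P Q qs \<longrightarrow>
           (\<exists>qs'. legalR R P Q qs' \<and> coverR R P qs' \<and> length qs \<le> length qs')"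
proof (induction n rule: less_induct)
  case (less n)
  show ?case
  proof (intro allI impI)
    fix qs assume n: "card Q - length qs = n" and l: "legalR R P Q qs"
    show "\<exists>qs'. legalR R P Q qs' \<and> coverR R P qs' \<and> length qs \<le> length qs'"
    proof (cases "coverR R P qs")
      case True then show ?thesis using l by blast
    next
      case False
      then obtain p where p: "p \<in> P" "\<forall>q\<in>set qs. \<not> R p q" unfolding coverR_def by blast
      then obtain q where q: "q \<in> Q" "R p q" using assms(2) by blast
      have qn: "q \<notin> set qs" using p q by blast
      have l2: "legalR R P Q (qs @ [q])"
        using l qn q p unfolding legalR_def by (auto simp: legalg_snoc fpR_def)
      have "length (qs @ [q]) \<le> card Q" using legalR_len[OF assms(1) l2] .
      then have "card Q - length (qs @ [q]) < n" using n by simp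
      from less[rule_format, OF this refl l2] show ?thesis by fastforce
    qed
  qed
qed

lemma extend:
  assumes "finite Q" "\<forall>p\<in>P. \<exists>q\<in>Q. R p q" "legalR R P Q qs"
  shows "\<exists>qs'. legalR R P Q qs' \<and> coverR R P qs' \<and> length qs \<le> length qs'"
  using extend_aux[OF assms(1,2)] assms(3) by blast

definition tri :: "('p \<Rightarrow> 'q \<Rightarrow> bool) \<Rightarrow> 'p list \<Rightarrow> 'q list \<Rightarrow> bool" where
  "tri R ps qs = (length ps = length qs \<and> (\<forall>i<length qs. R (ps ! i) (qs ! i)) \<and>
      (\<forall>i j. j < i \<and> i < length qs \<longrightarrow> \<not> R (ps ! i) (qs ! j)))"

lemma tri_from_legal:
  assumes "legalR R P Q qs" "qs \<noteq> [] \<longrightarrow> (\<exists>p\<in>P. R p (qs ! 0))"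
  shows "\<exists>ps. set ps \<subseteq> P \<and> tri R ps qs"
proof -
  have "\<forall>i. \<exists>p. i < length qs \<longrightarrow> p \<in> P \<and> R p (qs ! i) \<and> (\<forall>j<i. \<not> R p (qs ! j))"
  proof
    fix i
    show "\<exists>p. i < length qs \<longrightarrow> p \<in> P \<and> R p (qs ! i) \<and> (\<forall>j<i. \<not> R p (qs ! j))"
    proof (cases "i < length qs")
      case False then show ?thesis by blast
    next
      case True
      show ?thesis
      proof (cases "i = 0")
        case True
        then show ?thesis using assms(2) \<open>i < length qs\<close> by auto
      next
        case False
        then have "fpR R P (qs ! i) (take i qs)"
          using assms(1) \<open>i < length qs\<close> unfolding legalR_def legalg_def by auto
        then obtain p where "p \<in> P" "R p (qs ! i)" "\<forall>q'\<in>set (take i qs). \<not> R p q'"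
          unfolding fpR_def by blast
        moreover have "\<forall>j<i. qs ! j \<in> set (take i qs)"
          using \<open>i < length qs\<close> by (auto simp: in_set_conv_nth)
        ultimately show ?thesis by blast
      qed
    qed
  qed
  then obtain f where f: "\<forall>i. i < length qs \<longrightarrow> f i \<in> P \<and> R (f i) (qs ! i) \<and> (\<forall>j<i. \<not> R (f i) (qs ! j))"
    by metis
  show ?thesis
    by (rule exI[of _ "map f [0..<length qs]"]) (use f in \<open>auto simp: tri_def\<close>)
qed

lemma tri_rev:
  assumes "tri R ps qs"
  shows "tri (\<lambda>q p. R p q) (rev qs) (rev ps)"
  unfolding tri_def
proof (intro conjI allI impI)
  show "length (rev qs) = length (rev ps)" using assms unfolding tri_def by simp
  show "\<And>i. i < length (rev ps) \<Longrightarrow> R (rev ps ! i) (rev qs ! i)"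
    using assms unfolding tri_def by (auto simp: rev_nth)
  fix i j assume ij: "j < i \<and> i < length (rev ps)"
  let ?n = "length qs"
  have "\<not> R (ps ! (?n - Suc j)) (qs ! (?n - Suc i))"
  proof -
    have "?n - Suc i < ?n - Suc j" "?n - Suc j < ?n" using ij assms unfolding tri_def by auto
    then show ?thesis using assms unfolding tri_def by blast
  qed
  then show "\<not> R (rev ps ! j) (rev qs ! i)"
    using assms ij unfolding tri_def by (simp add: rev_nth)
qed

lemma legal_from_tri:
  assumes "tri R ps qs" "set ps \<subseteq> P" "set qs \<subseteq> Q"
  shows "legalR R P Q qs"
proof -
  have d: "distinct qs"
    unfolding distinct_conv_nth
  proof (intro allI impI)
    fix i j assume ij: "i < length qs" "j < length qs" "i \<noteq> j"
    show "qs ! i \<noteq> qs ! j"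
    proof (cases "j < i")
      case True then show ?thesis using assms(1) ij unfolding tri_def by metis
    next
      case False then have "i < j" using ij by simp
      then show ?thesis using assms(1) ij unfolding tri_def by metis
    qed
  qed
  have "legalg (fpR R P) qs"
    unfolding legalg_def fpR_def
  proof (intro allI impI)
    fix i assume i: "1 \<le> i \<and> i < length qs"
    have "ps ! i \<in> P" using assms(1,2) i unfolding tri_def by (metis nth_mem subsetD)
    moreover have "R (ps ! i) (qs ! i)" using assms(1) i unfolding tri_def by blast
    moreover have "\<forall>q'\<in>set (take i qs). \<not> R (ps ! i) q'"
    proof
      fix q' assume "q' \<in> set (take i qs)"
      then obtain j where "j < i" "q' = qs ! j" using i by (auto simp: in_set_conv_nth)
      then show "\<not> R (ps ! i) q'" using assms(1) i unfolding tri_def by blast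
    qed
    ultimately show "\<exists>p\<in>P. R p (qs ! i) \<and> (\<forall>q'\<in>set (take i qs). \<not> R p q')" by blast
  qed
  then show ?thesis using d assms(3) unfolding legalR_def by blast
qed

lemma transpose:
  assumes "legalR R P Q qs" "qs \<noteq> [] \<longrightarrow> (\<exists>p\<in>P. R p (qs ! 0))"
  shows "\<exists>ps. legalR (\<lambda>q p. R p q) Q P ps \<and> length ps = length qs"
proof -
  obtain ps where ps: "set ps \<subseteq> P" "tri R ps qs" using tri_from_legal[OF assms] by blast
  have "tri (\<lambda>q p. R p q) (rev qs) (rev ps)" using tri_rev[OF ps(2)] .
  moreover have "set qs \<subseteq> Q" using assms(1) unfolding legalR_def by blast
  ultimately have "legalR (\<lambda>q p. R p q) Q P (rev ps)"
    using ps(1) legal_from_tri[of "\<lambda>q p. R p q" "rev qs" "rev ps" Q P] by auto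
  then show ?thesis using ps(2) unfolding tri_def by (intro exI[of _ "rev ps"]) simp
qed


fun getl :: "('a + 'b) list \<Rightarrow> 'a list" where
  "getl [] = []" | "getl (Inl x # vs) = x # getl vs" | "getl (Inr _ # vs) = getl vs"

fun getr :: "('a + 'b) list \<Rightarrow> 'b list" where
  "getr [] = []" | "getr (Inr x # vs) = x # getr vs" | "getr (Inl _ # vs) = getr vs"

lemma getl_append[simp]: "getl (vs @ ws) = getl vs @ getl ws"
  by (induction vs rule: getl.induct) auto

lemma getr_append[simp]: "getr (vs @ ws) = getr vs @ getr ws"
  by (induction vs rule: getr.induct) auto

lemma set_getl: "set (getl vs) = {x. Inl x \<in> set vs}"
  by (induction vs rule: getl.induct) auto

lemma set_getr: "set (getr vs) = {x. Inr x \<in> set vs}"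
  by (induction vs rule: getr.induct) auto

lemma len_get: "length vs = length (getl vs) + length (getr vs)"
  by (induction vs rule: getl.induct) auto

lemma N_Inl_Inr: "Inr B \<in> open_nbhd (inc_vertices X E) inc_adj (Inl x) \<longleftrightarrow> B \<in> E \<and> x \<in> B"
  by (auto simp: open_nbhd_def inc_vertices_def)
lemma N_Inl_Inl: "Inl y \<notin> open_nbhd (inc_vertices X E) inc_adj (Inl x)"
  by (auto simp: open_nbhd_def inc_vertices_def)
lemma N_Inr_Inl: "Inl y \<in> open_nbhd (inc_vertices X E) inc_adj (Inr B) \<longleftrightarrow> y \<in> X \<and> y \<in> B"
  by (auto simp: open_nbhd_def inc_vertices_def)
lemma N_Inr_Inr: "Inr C \<notin> open_nbhd (inc_vertices X E) inc_adj (Inr B)"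
  by (auto simp: open_nbhd_def inc_vertices_def)

abbreviation FG where
  "FG X E \<equiv> (\<lambda>v prev. open_nbhd (inc_vertices X E) inc_adj v -
        \<Union>(open_nbhd (inc_vertices X E) inc_adj ` set prev) \<noteq> {})"

lemma tds_legalg: "total_dom_seq V adj vs \<longleftrightarrow> distinct vs \<and> set vs \<subseteq> V \<and>
   legalg (\<lambda>v prev. open_nbhd V adj v - \<Union>(open_nbhd V adj ` set prev) \<noteq> {}) vs \<and>
   (\<forall>w\<in>V. \<exists>v\<in>set vs. w \<in> open_nbhd V adj v)"
  unfolding total_dom_seq_def legalg_def by blast

lemma get_legal:
  assumes "distinct vs" "set vs \<subseteq> inc_vertices X E" "legalg (FG X E) vs"
  shows "legalR (\<lambda>x B. x \<in> B) X E (getr vs) \<and> legalR (\<lambda>B x. x \<in> B) E X (getl vs)"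
  using assms
proof (induction vs rule: rev_induct)
  case Nil
  then show ?case by (simp add: legalR_def)
next
  case (snoc v vs)
  have IH: "legalR (\<lambda>x B. x \<in> B) X E (getr vs) \<and> legalR (\<lambda>B x. x \<in> B) E X (getl vs)"
    using snoc.IH snoc.prems by (simp add: legalg_snoc)
  have vn: "v \<notin> set vs" using snoc.prems(1) by simp
  have fg: "vs \<noteq> [] \<longrightarrow> FG X E v vs" using snoc.prems(3) by (simp add: legalg_snoc)
  show ?case
  proof (cases v)
    case (Inl x)
    have xX: "x \<in> X" using snoc.prems(2) Inl by (auto simp: inc_vertices_def)
    have xn: "x \<notin> set (getl vs)" using vn Inl by (simp add: set_getl)
    have fp: "getl vs \<noteq> [] \<longrightarrow> fpR (\<lambda>B x. x \<in> B) E x (getl vs)"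
    proof
      assume "getl vs \<noteq> []"
      then have "vs \<noteq> []" by auto
      with fg Inl have "open_nbhd (inc_vertices X E) inc_adj (Inl x) -
        \<Union>(open_nbhd (inc_vertices X E) inc_adj ` set vs) \<noteq> {}" by simp
      then obtain w where w1: "w \<in> open_nbhd (inc_vertices X E) inc_adj (Inl x)"
        and w2: "w \<notin> \<Union>(open_nbhd (inc_vertices X E) inc_adj ` set vs)" by blast
      have w3: "\<forall>u\<in>set vs. w \<notin> open_nbhd (inc_vertices X E) inc_adj u" using w2 by blast
      obtain B where B: "w = Inr B" using w1 N_Inl_Inl[of _ X E x] by (cases w) auto
      have BxB: "B \<in> E \<and> x \<in> B" using w1 B by (simp add: N_Inl_Inr)
      then have BE: "B \<in> E" and xB: "x \<in> B" by auto
      have "\<forall>y\<in>set (getl vs). y \<notin> B"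
      proof
        fix y assume "y \<in> set (getl vs)"
        then have "Inl y \<in> set vs" by (simp add: set_getl)
        then have "Inr B \<notin> open_nbhd (inc_vertices X E) inc_adj (Inl y)" using w3 B by blast
        then show "y \<notin> B" using BE by (simp add: N_Inl_Inr)
      qed
      then show "fpR (\<lambda>B x. x \<in> B) E x (getl vs)" unfolding fpR_def using BE xB by blast
    qed
    have "legalR (\<lambda>B x. x \<in> B) E X (getl vs @ [x])"
      using IH xn xX fp unfolding legalR_def by (simp add: legalg_snoc)
    then show ?thesis using IH Inl by simp
  next
    case (Inr B)
    have BE: "B \<in> E" using snoc.prems(2) Inr by (auto simp: inc_vertices_def)
    have Bn: "B \<notin> set (getr vs)" using vn Inr by (simp add: set_getr)
    have fp: "getr vs \<noteq> [] \<longrightarrow> fpR (\<lambda>x B. x \<in> B) X B (getr vs)"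
    proof
      assume "getr vs \<noteq> []"
      then have "vs \<noteq> []" by auto
      with fg Inr have "open_nbhd (inc_vertices X E) inc_adj (Inr B) -
        \<Union>(open_nbhd (inc_vertices X E) inc_adj ` set vs) \<noteq> {}" by simp
      then obtain w where w1: "w \<in> open_nbhd (inc_vertices X E) inc_adj (Inr B)"
        and w2: "w \<notin> \<Union>(open_nbhd (inc_vertices X E) inc_adj ` set vs)" by blast
      have w3: "\<forall>u\<in>set vs. w \<notin> open_nbhd (inc_vertices X E) inc_adj u" using w2 by blast
      obtain y where y: "w = Inl y" using w1 N_Inr_Inr[of _ X E B] by (cases w) auto
      have yXB: "y \<in> X \<and> y \<in> B" using w1 y by (simp add: N_Inr_Inl)
      then have yX: "y \<in> X" and yB: "y \<in> B" by auto
      have "\<forall>C\<in>set (getr vs). y \<notin> C"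
      proof
        fix C assume "C \<in> set (getr vs)"
        then have "Inr C \<in> set vs" by (simp add: set_getr)
        then have "Inl y \<notin> open_nbhd (inc_vertices X E) inc_adj (Inr C)" using w3 y by blast
        then show "y \<notin> C" using yX by (simp add: N_Inr_Inl)
      qed
      then show "fpR (\<lambda>x B. x \<in> B) X B (getr vs)" unfolding fpR_def using yX yB by blast
    qed
    have "legalR (\<lambda>x B. x \<in> B) X E (getr vs @ [B])"
      using IH Bn BE fp unfolding legalR_def by (simp add: legalg_snoc)
    then show ?thesis using IH Inr by simp
  qed
qed

lemma ecs_iff:
  assumes "\<forall>B\<in>E. B \<subseteq> X"
  shows "edge_covering_seq X E cs \<longleftrightarrow> legalR (\<lambda>x B. x \<in> B) X E cs \<and> coverR (\<lambda>x B. x \<in> B) X cs"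
proof -
  have 1: "set cs \<subseteq> E \<Longrightarrow> (\<Union>(set cs) = X) \<longleftrightarrow> coverR (\<lambda>x B. x \<in> B) X cs"
    using assms unfolding coverR_def by blast
  have 2: "set cs \<subseteq> E \<Longrightarrow> i < length cs \<Longrightarrow>
     (cs ! i - \<Union>(set (take i cs)) \<noteq> {}) \<longleftrightarrow> fpR (\<lambda>x B. x \<in> B) X (cs ! i) (take i cs)" for i
  proof -
    assume "set cs \<subseteq> E" "i < length cs"
    then have "cs ! i \<subseteq> X" using assms nth_mem by blast
    then show ?thesis unfolding fpR_def by blast
  qed
  show ?thesis
    unfolding edge_covering_seq_def legalR_def legalg_def using 1 2 by blast
qed

theorem mainTheorem19:
  fixes X :: "'a set" and E :: "'a set set"
  assumes "hypergraph X E"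
    and "no_isolated_vertices_hg X E"
    and "{} \<notin> E"
  shows "grundy_total_dom (inc_vertices X E) inc_adj = 2 * rho_gr X E"
proof -
  let ?R1 = "\<lambda>(x::'a) (B::'a set). x \<in> B"
  let ?R2 = "\<lambda>(B::'a set) (x::'a). x \<in> B"
  let ?V = "inc_vertices X E"
  have fX: "finite X" and fE: "finite E" and sub: "\<forall>B\<in>E. B \<subseteq> X"
    using assms(1) unfolding hypergraph_def by auto
  have iso: "\<forall>x\<in>X. \<exists>B\<in>E. x \<in> B" using assms(2) unfolding no_isolated_vertices_hg_def .
  have ne: "\<forall>B\<in>E. \<exists>x\<in>X. x \<in> B"
  proof
    fix B assume BE: "B \<in> E"
    then have "B \<noteq> {}" using assms(3) by metis
    then obtain x where "x \<in> B" by blast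
    then show "\<exists>x\<in>X. x \<in> B" using sub BE by blast
  qed
  let ?S = "{length cs | cs. edge_covering_seq X E cs}"
  have finS: "finite ?S"
  proof (rule finite_subset[of _ "{..card E}"])
    show "?S \<subseteq> {..card E}" using legalR_len[OF fE] ecs_iff[OF sub] by fastforce
  qed simp
  obtain cs0 where cs0: "legalR ?R1 X E cs0" "coverR ?R1 X cs0"
    using extend[OF fE iso, of "[]"] by (auto simp: legalR_def)
  have neS: "?S \<noteq> {}" using cs0 ecs_iff[OF sub] by blast
  have rho: "rho_gr X E = Max ?S" unfolding rho_gr_def ..
  obtain cs where cs: "edge_covering_seq X E cs" "length cs = rho_gr X E"
    using Max_in[OF finS neS] rho by auto
  have K1: "legalR ?R1 X E qs \<Longrightarrow> length qs \<le> rho_gr X E" for qs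
  proof -
    assume "legalR ?R1 X E qs"
    then obtain qs' where "legalR ?R1 X E qs'" "coverR ?R1 X qs'" "length qs \<le> length qs'"
      using extend[OF fE iso] by blast
    then have "length qs' \<in> ?S" using ecs_iff[OF sub] by blast
    then show ?thesis using Max_ge[OF finS] rho \<open>length qs \<le> length qs'\<close> by fastforce
  qed
  have K2: "legalR ?R2 E X xs \<Longrightarrow> length xs \<le> rho_gr X E" for xs
  proof -
    assume l: "legalR ?R2 E X xs"
    have "xs \<noteq> [] \<longrightarrow> (\<exists>B\<in>E. xs ! 0 \<in> B)"
    proof
      assume "xs \<noteq> []"
      then have "xs ! 0 \<in> X" using l unfolding legalR_def by (meson nth_mem subsetD length_greater_0_conv)
      then show "\<exists>B\<in>E. xs ! 0 \<in> B" using iso by blast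
    qed
    from transpose[of ?R2 E X xs, OF l] this obtain ps where
      "legalR ?R1 X E ps" "length ps = length xs" by auto
    then show ?thesis using K1 by fastforce
  qed
  have csl: "legalR ?R1 X E cs" "coverR ?R1 X cs" using cs ecs_iff[OF sub] by auto
  obtain xs0 where xs0: "legalR ?R2 E X xs0" "length xs0 = length cs"
  proof -
    have "cs \<noteq> [] \<longrightarrow> (\<exists>x\<in>X. x \<in> cs ! 0)"
    proof
      assume "cs \<noteq> []"
      then have "cs ! 0 \<in> E" using csl unfolding legalR_def by (meson nth_mem subsetD length_greater_0_conv)
      then show "\<exists>x\<in>X. x \<in> cs ! 0" using ne by blast
    qed
    from transpose[of ?R1 X E cs, OF csl(1)] this show ?thesis using that by auto
  qed
  obtain xs where xs: "legalR ?R2 E X xs" "coverR ?R2 E xs" "length cs \<le> length xs"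
    using extend[OF fX ne xs0(1)] xs0(2) by auto
  let ?T = "{length vs | vs. total_dom_seq ?V inc_adj vs}"
  have fV: "finite ?V" using fX fE unfolding inc_vertices_def by simp
  have up: "\<forall>n\<in>?T. n \<le> 2 * rho_gr X E"
  proof
    fix n assume "n \<in> ?T"
    then obtain vs where vs: "total_dom_seq ?V inc_adj vs" "n = length vs" by blast
    have "legalR ?R1 X E (getr vs) \<and> legalR ?R2 E X (getl vs)"
      using vs(1) get_legal[of vs X E] unfolding tds_legalg by blast
    then show "n \<le> 2 * rho_gr X E" using K1 K2 len_get[of vs] vs(2) by fastforce
  qed
  have finT: "finite ?T"
  proof (rule finite_subset[of _ "{..card ?V}"])
    show "?T \<subseteq> {..card ?V}"
    proof
      fix n assume "n \<in> ?T"
      then obtain us where "total_dom_seq ?V inc_adj us" "n = length us" by blast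
      then have "distinct us" "set us \<subseteq> ?V" unfolding total_dom_seq_def by auto
      then have "n \<le> card ?V" using card_mono[OF fV] distinct_card \<open>n = length us\<close> by metis
      then show "n \<in> {..card ?V}" by simp
    qed
  qed simp
  define vs where "vs = map Inr cs @ map Inl xs"
  have lgr: "legalg (FG X E) (map Inr cs)"
  proof -
    have "legalR ?R1 X E ds \<Longrightarrow> legalg (FG X E) (map Inr ds)" for ds
    proof (induction ds rule: rev_induct)
      case Nil then show ?case by simp
    next
      case (snoc B ds)
      have fp: "ds \<noteq> [] \<longrightarrow> fpR ?R1 X B ds" and l: "legalR ?R1 X E ds"
        using snoc.prems by (auto simp: legalR_def legalg_snoc)
      have "ds \<noteq> [] \<longrightarrow> FG X E (Inr B) (map Inr ds)"
      proof
        assume "ds \<noteq> []"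
        then obtain x where "x \<in> X" "x \<in> B" "\<forall>C\<in>set ds. x \<notin> C" using fp unfolding fpR_def by blast
        then have "Inl x \<in> open_nbhd ?V inc_adj (Inr B)"
          "\<forall>C\<in>set ds. Inl x \<notin> open_nbhd ?V inc_adj (Inr C)"
          using \<open>x \<in> X\<close> \<open>x \<in> B\<close> \<open>\<forall>C\<in>set ds. x \<notin> C\<close> by (simp_all add: N_Inr_Inl)
        then show "FG X E (Inr B) (map Inr ds)" by auto
      qed
      then show ?case using snoc.IH[OF l] by (simp add: legalg_snoc)
    qed
    then show ?thesis using csl(1) .
  qed
  have lgl: "legalR ?R2 E X ys \<Longrightarrow> legalg (FG X E) (map Inr cs @ map Inl ys)" for ys
  proof (induction ys rule: rev_induct)
    case Nil then show ?case using lgr by simp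
  next
    case (snoc x ys)
    have fp: "ys \<noteq> [] \<longrightarrow> fpR ?R2 E x ys" and l: "legalR ?R2 E X ys" and xX: "x \<in> X"
      using snoc.prems by (auto simp: legalR_def legalg_snoc)
    obtain B where B: "B \<in> E" "x \<in> B" "\<forall>y\<in>set ys. y \<notin> B"
    proof (cases "ys = []")
      case True then show ?thesis using iso xX that by auto
    next
      case False then show ?thesis using fp that unfolding fpR_def by blast
    qed
    have "Inr B \<in> open_nbhd ?V inc_adj (Inl x)" using B by (simp add: N_Inl_Inr)
    moreover have "\<forall>u\<in>set (map Inr cs @ map Inl ys). Inr B \<notin> open_nbhd ?V inc_adj u"
      using B by (auto simp add: N_Inl_Inr N_Inr_Inr)
    ultimately have "FG X E (Inl x) (map Inr cs @ map Inl ys)" by blast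
    then show ?case using snoc.IH[OF l]
      by (simp add: legalg_snoc[where qs = "map Inr cs @ map Inl ys", simplified])
  qed
  have tds: "total_dom_seq ?V inc_adj vs"
    unfolding tds_legalg
  proof (intro conjI)
    show "distinct vs" using csl(1) xs(1) unfolding vs_def legalR_def
      by (auto simp: distinct_map)
    show "set vs \<subseteq> ?V" using csl(1) xs(1) unfolding vs_def legalR_def inc_vertices_def by auto
    show "legalg (FG X E) vs" using lgl[OF xs(1)] unfolding vs_def .
    show "\<forall>w\<in>?V. \<exists>v\<in>set vs. w \<in> open_nbhd ?V inc_adj v"
    proof
      fix w assume w: "w \<in> ?V"
      show "\<exists>v\<in>set vs. w \<in> open_nbhd ?V inc_adj v"
      proof (cases w)
        case (Inl x)
        then have "x \<in> X" using w by (auto simp: inc_vertices_def)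
        then obtain B where "B \<in> set cs" "x \<in> B" using csl(2) unfolding coverR_def by blast
        have "Inl x \<in> open_nbhd ?V inc_adj (Inr B)" using \<open>x \<in> X\<close> \<open>x \<in> B\<close> by (simp add: N_Inr_Inl)
        moreover have "Inr B \<in> set vs" unfolding vs_def using \<open>B \<in> set cs\<close> by simp
        ultimately show ?thesis using Inl by blast
      next
        case (Inr B)
        then have "B \<in> E" using w by (auto simp: inc_vertices_def)
        then obtain x where "x \<in> set xs" "x \<in> B" using xs(2) unfolding coverR_def by blast
        have "Inr B \<in> open_nbhd ?V inc_adj (Inl x)" using \<open>B \<in> E\<close> \<open>x \<in> B\<close> by (simp add: N_Inl_Inr)
        moreover have "Inl x \<in> set vs" unfolding vs_def using \<open>x \<in> set xs\<close> by simp
        ultimately show ?thesis using Inr by blast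
      qed
    qed
  qed
  have "length vs \<in> ?T" using tds by blast
  moreover have "2 * rho_gr X E \<le> length vs" using cs(2) xs(3) unfolding vs_def by simp
  ultimately have "2 * rho_gr X E \<le> Max ?T" using Max_ge[OF finT] by fastforce
  moreover have "Max ?T \<le> 2 * rho_gr X E"
    using up finT \<open>length vs \<in> ?T\<close> by (subst Max_le_iff) auto
  ultimately show ?thesis unfolding grundy_total_dom_def by simp
qed

end
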